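(* Let $H^{(2)}_n=\sum_{0<j\leqslant n}1/j^2$ for $n=0,1,2,\ldots$ (so $H^{(2)}_0=0$), and let $(F_n)_{n\geqslant0}$, $(L_n)_{n\geqslant0}$ be the Fibonacci and Lucas numbers. For $k\geqslant0$ define $$u_k=\begin{cases}5^{k/2}F_k & \text{if } 2\mid k,\\ 5^{(k-1)/2}L_k & \text{if } 2\nmid k,\end{cases}\qquad v_k=\begin{cases}5^{k/2}L_k & \text{if } 2\mid k,\\ 5^{(k+1)/2}F_k & \text{if } 2\nmid k.\end{cases}$$ Then: (i) $$\sum_{k=1}^\infty\frac{H_{k-1}^{(2)}}{k^2\binom{2k}k}=\frac{\pi^4}{1944},$$ $$\sum_{k=1}^\infty\frac{L_{2k}H_{k-1}^{(2)}}{k^2\binom{2k}k}=\frac{41\pi^4}{7500},\qquad \sum_{k=1}^\infty\frac{F_{2k}H_{k-1}^{(2)}}{k^2\binom{2k}k}=\frac{2\pi^4}{375\sqrt5},$$ $$\sum_{k=1}^\infty\frac{v_kH_{k-1}^{(2)}}{k^2\binom{2k}k}=\frac{34\pi^4}{1875},\qquad \sum_{k=1}^\infty\frac{u_kH_{k-1}^{(2)}}{k^2\binom{2k}k}=\frac{2\pi^4}{125\sqrt5}.$$ (ii) For every real $x$ with $0\leqslant x<4$, $$\sum_{k=1}^\infty\frac{H_{k-1}^{(2)}x^k}{k\binom{2k}k}=\frac43\sqrt{\frac{x}{4-x}}\,\arcsin^3\frac{\sqrt x}2.$$ In particular, $$\sum_{k=1}^\infty\frac{H_{k-1}^{(2)}}{k\binom{2k}k}=\frac{\pi^3}{162\sqrt3}\qquad\text{and}\qquad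 \sum_{k=1}^\infty\frac{3^kH_{k-1}^{(2)}}{k\binom{2k}k}=\frac{4\pi^3}{27\sqrt3}.$$
   Context: Fibonacci numbers: $F_0=0$, $F_1=1$, $F_{n+1}=F_n+F_{n-1}$ for $n\geqslant1$. Lucas numbers: $L_0=2$, $L_1=1$, $L_{n+1}=L_n+L_{n-1}$ for $n\geqslant1$. $H^{(2)}_n$ is the second-order harmonic number $\sum_{0<j\leqslant n}1/j^2$. *)

theory Defs
  imports "HOL-Analysis.Analysis" "HOL-Number_Theory.Fib"
begin

fun lucas :: "nat \<Rightarrow> nat" where
  "lucas 0 = 2"
| "lucas (Suc 0) = 1"
| "lucas (Suc (Suc n)) = lucas (Suc n) + lucas n"

definition harm2 :: "nat \<Rightarrow> real" where
  "harm2 n = (\<Sum>j=1..n. 1 / (real j)^2)"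

definition u_seq :: "nat \<Rightarrow> real" where
  "u_seq k = (if even k then 5 ^ (k div 2) * real (fib k)
              else 5 ^ ((k - 1) div 2) * real (lucas k))"

definition v_seq :: "nat \<Rightarrow> real" where
  "v_seq k = (if even k then 5 ^ (k div 2) * real (lucas k)
              else 5 ^ ((k + 1) div 2) * real (fib k))"

end

theory Submission
  imports Defs
begin

definition PS :: "(nat \<Rightarrow> real) \<Rightarrow> real \<Rightarrow> real" where
  "PS a s = (\<Sum>n. a n * s^n)"

definition conv :: "(nat \<Rightarrow> real) \<Rightarrow> bool" where
  "conv a \<longleftrightarrow> (\<forall>s::real. \<bar>s\<bar> < 1 \<longrightarrow> summable (\<lambda>n. a n * s^n))"

lemma conv_diffs: "conv a \<Longrightarrow> conv (diffs a)"
  unfolding conv_def by (auto intro: termdiff_converges[where K=1])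

lemma PS_deriv: "conv a \<Longrightarrow> \<bar>s\<bar> < 1 \<Longrightarrow> (PS a has_real_derivative PS (diffs a) s) (at s)"
  unfolding PS_def conv_def by (rule termdiffs_strong'[where K=1]) auto

lemma PS_sums: "conv a \<Longrightarrow> \<bar>s\<bar> < 1 \<Longrightarrow> (\<lambda>n. a n * s^n) sums PS a s"
  unfolding PS_def conv_def by (simp add: summable_sums)

lemma sin_lt1: "\<bar>t\<bar> < pi/2 \<Longrightarrow> \<bar>sin t\<bar> < 1"
proof -
  assume t: "\<bar>t\<bar> < pi/2"
  have "cos t > 0" using t by (intro cos_gt_zero_pi) auto
  hence "(sin t)^2 < 1" using sin_cos_squared_add[of t] by (simp add: power2_eq_square) (smt (verit) mult_pos_pos)
  thus ?thesis by (simp add: abs_square_less_1)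
qed

lemma shift1:
  assumes "(\<lambda>n. diffs b n * s^n) sums S"
  shows "(\<lambda>n. real n * b n * s^n) sums (s*S)"
proof -
  have "(\<lambda>n. s * (diffs b n * s^n)) sums (s*S)" by (rule sums_mult[OF assms])
  hence "(\<lambda>n. (\<lambda>n. real n * b n * s^n) (Suc n)) sums (s*S)"
    by (simp add: diffs_def algebra_simps)
  thus ?thesis by (subst (asm) sums_Suc_iff) simp
qed

lemma coeff_identity:
  assumes "conv a" "\<bar>s\<bar> < 1"
  shows "(\<lambda>n. (real (n+2) * real (n+1) * a (n+2) - (real n)^2 * a n) * s^n) sums
           (PS (diffs (diffs a)) s * (1 - s^2) - PS (diffs a) s * s)"
proof -
  have c1: "conv (diffs a)" and c2: "conv (diffs (diffs a))" using assms conv_diffs by auto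
  have S2: "(\<lambda>n. diffs (diffs a) n * s^n) sums PS (diffs (diffs a)) s" using PS_sums[OF c2 assms(2)] .
  have S1: "(\<lambda>n. diffs a n * s^n) sums PS (diffs a) s" using PS_sums[OF c1 assms(2)] .
  have T1: "(\<lambda>n. real n * a n * s^n) sums (s * PS (diffs a) s)" by (rule shift1[OF S1])
  have T2': "(\<lambda>n. real n * diffs a n * s^n) sums (s * PS (diffs (diffs a)) s)" by (rule shift1[OF S2])
  have "(\<lambda>n. s * (real n * diffs a n * s^n)) sums (s * (s * PS (diffs (diffs a)) s))"
    by (rule sums_mult[OF T2'])
  hence "(\<lambda>n. (\<lambda>n. real n * (real n - 1) * a n * s^n) (Suc n)) sums (s^2 * PS (diffs (diffs a)) s)"
    by (simp add: diffs_def algebra_simps power2_eq_square)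
  hence T2: "(\<lambda>n. real n * (real n - 1) * a n * s^n) sums (s^2 * PS (diffs (diffs a)) s)"
    by (subst (asm) sums_Suc_iff) simp
  have "(\<lambda>n. diffs (diffs a) n * s^n - real n * (real n - 1) * a n * s^n - real n * a n * s^n) sums
        (PS (diffs (diffs a)) s - s^2 * PS (diffs (diffs a)) s - s * PS (diffs a) s)"
    by (intro sums_diff S2 T1 T2)
  moreover have "(\<lambda>n. diffs (diffs a) n * s^n - real n * (real n - 1) * a n * s^n - real n * a n * s^n)
     = (\<lambda>n. (real (n+2) * real (n+1) * a (n+2) - (real n)^2 * a n) * s^n)"
    by (rule ext) (simp add: diffs_def algebra_simps power2_eq_square)
  ultimately show ?thesis by (simp add: algebra_simps)
qed

lemma sin_D1:
  assumes "conv a" "\<bar>t\<bar> < pi/2"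
  shows "((\<lambda>t. PS a (sin t)) has_real_derivative (PS (diffs a) (sin t) * cos t)) (at t)"
  using DERIV_chain2[OF PS_deriv[OF assms(1) sin_lt1[OF assms(2)]] DERIV_sin] .

lemma sin_D2:
  assumes "conv a" "\<bar>t\<bar> < pi/2"
  shows "((\<lambda>t. PS (diffs a) (sin t) * cos t) has_real_derivative
           PS (\<lambda>n. real (n+2) * real (n+1) * a (n+2) - (real n)^2 * a n) (sin t)) (at t)"
proof -
  have c1: "conv (diffs a)" using assms conv_diffs by auto
  have d: "((\<lambda>t. PS (diffs a) (sin t) * cos t) has_real_derivative
      (PS (diffs (diffs a)) (sin t) * cos t) * cos t + PS (diffs a) (sin t) * (- sin t)) (at t)"
    using DERIV_mult[OF sin_D1[OF c1 assms(2)] DERIV_cos[of t]] by (simp add: ac_simps)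
  have "PS (\<lambda>n. real (n+2) * real (n+1) * a (n+2) - (real n)^2 * a n) (sin t)
     = PS (diffs (diffs a)) (sin t) * (1 - (sin t)^2) - PS (diffs a) (sin t) * sin t"
    using coeff_identity[OF assms(1) sin_lt1[OF assms(2)]] unfolding PS_def by (simp add: sums_iff)
  also have "\<dots> = (PS (diffs (diffs a)) (sin t) * cos t) * cos t + PS (diffs a) (sin t) * (- sin t)"
  proof -
    have e: "1 - (sin t)^2 = cos t * cos t" using sin_cos_squared_add[of t] by (simp add: power2_eq_square)
    show ?thesis by (simp only: e)
  qed
  finally show ?thesis using d by simp
qed

lemma const0:
  fixes f :: "real \<Rightarrow> real"
  assumes "0 \<le> t" "t < T" "\<And>y. 0 \<le> y \<Longrightarrow> y < T \<Longrightarrow> (f has_real_derivative 0) (at y)"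
  shows "f t = f 0"
proof (cases "t = 0")
  case False
  show ?thesis
  proof (rule DERIV_isconst2[of 0 t])
    show "continuous_on {0..t} f"
    proof (intro continuous_at_imp_continuous_on ballI)
      fix x assume "x \<in> {0..t}"
      thus "isCont f x" using assms by (intro DERIV_isCont[OF assms(3)]) auto
    qed
  qed (use assms False in auto)
qed simp

definition hk :: "nat \<Rightarrow> real" where
  "hk k = (if k = 0 then 0 else 4^k / (2 * (real k)^2 * real ((2*k) choose k)))"
definition gk :: "nat \<Rightarrow> real" where
  "gk k = harm2 (k-1) * 4^k / ((real k)^2 * real ((2*k) choose k))"
definition ev :: "(nat \<Rightarrow> real) \<Rightarrow> nat \<Rightarrow> real" where
  "ev f n = (if even n then f (n div 2) else 0)"

lemma binom_step_nat:
  "((2*(k+1)) choose (k+1)) * (k + 1)^2 = (2*k+2)*(2*k+1)*((2*k) choose k)"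
proof -
  have a: "fact (k+1) * fact (k+1) * ((2*(k+1)) choose (k+1)) = fact (2*k+2)"
    using binomial_fact_lemma[of "k+1" "2*(k+1)"] by (simp add: mult_2)
  have b: "fact k * fact k * ((2*k) choose k) = fact (2*k)"
    using binomial_fact_lemma[of "k" "2*k"] by (simp add: mult_2)
  have f1: "(fact (2*k+2) :: nat) = (2*k+2)*(2*k+1)*fact (2*k)"
    by (simp add: algebra_simps)
  have f2: "(fact (k+1) :: nat) = (k + 1) * fact k" by simp
  have "fact k * fact k * (((2*(k+1)) choose (k+1)) * (k + 1)^2) = fact k * fact k * ((2*k+2)*(2*k+1)*((2*k) choose k))"
    using a b unfolding f1 f2 by (simp add: power2_eq_square algebra_simps)
  thus ?thesis by simp
qed

lemma binom_step:
  "real ((2*(k+1)) choose (k+1)) * (real k + 1)^2 = (2*real k+2)*(2*real k+1)*real ((2*k) choose k)"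
proof -
  have "real (((2*(k+1)) choose (k+1)) * (k + 1)^2) = real ((2*k+2)*(2*k+1)*((2*k) choose k))"
    by (subst binom_step_nat) (rule refl)
  thus ?thesis by (simp only: of_nat_mult of_nat_power of_nat_add of_nat_1 of_nat_numeral)
qed

lemma harm2_Suc: "harm2 (Suc n) = harm2 n + 1 / (real (Suc n))^2"
  unfolding harm2_def by simp

lemma harm2_le: "harm2 n \<le> real n"
proof (induction n)
  case 0 show ?case by (simp add: harm2_def)
next
  case (Suc n)
  have "1 / (real (Suc n))^2 \<le> 1" by (simp add: field_simps del: of_nat_Suc)
  moreover have "harm2 (Suc n) = harm2 n + 1 / (real (Suc n))^2" by (rule harm2_Suc)
  moreover have "real (Suc n) = real n + 1" by simp
  ultimately show ?case using Suc by linarith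
qed

lemma harm2_nonneg: "harm2 n \<ge> 0"
  unfolding harm2_def by (auto intro: sum_nonneg)

lemma cb_pos: "real ((2*k) choose k) > 0" by simp

lemma hk_bound: "\<bar>hk k\<bar> \<le> 1"
proof (cases "k = 0")
  case False
  have lb: "4^k / (2*real k) \<le> real ((2*k) choose k)" using central_binomial_lower_bound False by auto
  have "hk k = 4^k / (2 * (real k)^2 * real ((2*k) choose k))" using False by (simp add: hk_def)
  also have "\<dots> \<le> 4^k / (2 * (real k)^2 * (4^k / (2*real k)))"
    using False lb by (intro divide_left_mono mult_left_mono mult_pos_pos) auto
  also have "\<dots> = 1 / real k" using False by (simp add: field_simps power2_eq_square)
  also have "\<dots> \<le> 1" using False by simp
  finally show ?thesis using False by (simp add: hk_def)
qed (simp add: hk_def)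

lemma gk_bound: "\<bar>gk k\<bar> \<le> 2"
proof (cases "k = 0")
  case False
  have lb: "4^k / (2*real k) \<le> real ((2*k) choose k)" using central_binomial_lower_bound False by auto
  have hb: "harm2 (k-1) \<le> real k" using harm2_le[of "k-1"] by simp
  have "gk k \<le> real k * 4^k / ((real k)^2 * real ((2*k) choose k))"
    unfolding gk_def using hb by (intro divide_right_mono mult_right_mono) auto
  also have "\<dots> \<le> real k * 4^k / ((real k)^2 * (4^k / (2*real k)))"
    using False lb by (intro divide_left_mono mult_left_mono mult_pos_pos) auto
  also have "\<dots> = 2" using False by (simp add: field_simps power2_eq_square)
  finally have "gk k \<le> 2" .
  moreover have "gk k \<ge> 0" unfolding gk_def using harm2_nonneg by auto
  ultimately show ?thesis by simp
qed (simp add: gk_def harm2_def)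

lemma conv_ev:
  assumes "\<And>k. \<bar>f k\<bar> \<le> M"
  shows "conv (ev f)"
  unfolding conv_def
proof (intro allI impI)
  fix s :: real assume s: "\<bar>s\<bar> < 1"
  show "summable (\<lambda>n. ev f n * s^n)"
  proof (rule summable_comparison_test')
    show "summable (\<lambda>n. M * \<bar>s\<bar>^n)" using s by (intro summable_mult summable_geometric) auto
    show "norm (ev f n * s^n) \<le> M * \<bar>s\<bar>^n" for n
      using assms[of "n div 2"] assms[of 0] by (auto simp: ev_def abs_mult power_abs intro: mult_right_mono)
  qed
qed

lemma conv_h: "conv (ev hk)" by (rule conv_ev[OF hk_bound])
lemma conv_g: "conv (ev gk)" by (rule conv_ev[OF gk_bound])

lemma cancel_aux: "c \<noteq> 0 \<Longrightarrow> (c::real) * X / (2*(c*B)) = X / (2*B)"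
  by simp

lemma rec_h: "(\<lambda>n. real (n+2) * real (n+1) * ev hk (n+2) - (real n)^2 * ev hk n) = (\<lambda>n. if n = 0 then 2 else 0)"
proof
  fix n
  show "real (n+2) * real (n+1) * ev hk (n+2) - (real n)^2 * ev hk n = (if n = 0 then 2 else 0)"
  proof (cases "even n")
    case False
    hence "n \<noteq> 0" using odd_pos by fastforce
    thus ?thesis using False by (simp add: ev_def)
  next
    case True
    then obtain k where n: "n = 2*k" by blast
    have e: "(n+2) div 2 = k+1" "n div 2 = k" using n by auto
    show ?thesis
    proof (cases "k = 0")
      case True thus ?thesis using n by (simp add: ev_def hk_def)
    next
      case False
      define B' where "B' = real ((2*(k+1)) choose (k+1))"
      define B where "B = real ((2*k) choose k)"
      have h1: "hk (k+1) = 4^(k+1) / (2*(real k+1)^2 * B')" unfolding B'_def by (subst hk_def) simp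
      have h0: "hk k = 4^k / (2*(real k)^2 * B)" unfolding B_def using False by (simp add: hk_def)
      have bs: "B' * (real k+1)^2 = (2*real k+2)*(2*real k+1)*B" unfolding B'_def B_def by (rule binom_step)
      have pB: "B > 0" unfolding B_def by (rule cb_pos)
      have d: "2*(real k+1)^2*B' = 2*((2*real k+2)*(2*real k+1)*B)" using bs by (simp add: algebra_simps)
      have rn: "real (n+2) = 2*real k+2" "real (n+1) = 2*real k+1" using n by simp_all
      have "real (n+2) * real (n+1) * hk (k+1) = ((2*real k+2)*(2*real k+1)) * 4^(k+1) / (2*(((2*real k+2)*(2*real k+1))*B))"
        unfolding h1 d rn by (simp add: mult.assoc)
      also have "\<dots> = 4^(k+1) / (2 * B)"
        by (rule cancel_aux) (smt (verit) of_nat_0_le_iff mult_pos_pos)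
      finally have "real (n+2) * real (n+1) * hk (k+1) = 4^(k+1) / (2 * B)" .
      moreover have "(real n)^2 * hk k = 4^(k+1) / (2 * B)"
        unfolding h0 using False n pB by (simp add: field_simps power2_eq_square)
      ultimately show ?thesis using True n False e by (simp add: ev_def)
    qed
  qed
qed

lemma step_ratio:
  "(2*real k+2)*(2*real k+1) / ((real k+1)^2 * real ((2*(k+1)) choose (k+1))) = 1 / real ((2*k) choose k)"
proof -
  define B' where "B' = real ((2*(k+1)) choose (k+1))"
  define B where "B = real ((2*k) choose k)"
  have bs: "B' * (real k+1)^2 = (2*real k+2)*(2*real k+1)*B" unfolding B'_def B_def by (rule binom_step)
  have pB: "B > 0" unfolding B_def by (rule cb_pos)
  have c: "(2*real k+2)*(2*real k+1) > 0" by (smt (verit) of_nat_0_le_iff mult_pos_pos)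
  have "(2*real k+2)*(2*real k+1) / ((real k+1)^2 * B') = (2*real k+2)*(2*real k+1) / ((2*real k+2)*(2*real k+1)*B)"
    using bs by (simp add: mult.commute)
  also have "\<dots> = 1 / B" using c pB by simp
  finally show ?thesis unfolding B'_def B_def .
qed

lemma rec_g: "(\<lambda>n. real (n+2) * real (n+1) * ev gk (n+2) - (real n)^2 * ev gk n) = (\<lambda>n. 8 * ev hk n)"
proof
  fix n
  show "real (n+2) * real (n+1) * ev gk (n+2) - (real n)^2 * ev gk n = 8 * ev hk n"
  proof (cases "even n")
    case False
    thus ?thesis by (simp add: ev_def)
  next
    case True
    then obtain k where n: "n = 2*k" by blast
    have e: "(n+2) div 2 = k+1" "n div 2 = k" using n by auto
    define B where "B = real ((2*k) choose k)"
    have pB: "B > 0" unfolding B_def by (rule cb_pos)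
    have rn: "real (n+2) = 2*real k+2" "real (n+1) = 2*real k+1" using n by simp_all
    have g1: "gk (k+1) = harm2 k * 4^(k+1) / ((real k+1)^2 * real ((2*(k+1)) choose (k+1)))"
      by (subst gk_def) simp
    have A: "real (n+2) * real (n+1) * gk (k+1) = harm2 k * 4^(k+1) / B"
    proof -
      have "real (n+2) * real (n+1) * gk (k+1) = harm2 k * 4^(k+1) *
         ((2*real k+2)*(2*real k+1) / ((real k+1)^2 * real ((2*(k+1)) choose (k+1))))"
        unfolding g1 rn by simp
      also have "\<dots> = harm2 k * 4^(k+1) / B" unfolding step_ratio B_def by simp
      finally show ?thesis .
    qed
    show ?thesis
    proof (cases "k = 0")
      case True thus ?thesis using n by (simp add: ev_def gk_def hk_def harm2_def)
    next
      case False
      have hs: "harm2 k = harm2 (k-1) + 1 / (real k)^2"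
        using harm2_Suc[of "k-1"] False by simp
      have C: "(real n)^2 * gk k = harm2 (k-1) * 4^(k+1) / B"
        unfolding gk_def B_def[symmetric] using n False pB by (simp add: field_simps power2_eq_square)
      have D: "8 * hk k = 4^(k+1) / ((real k)^2 * B)"
        unfolding hk_def B_def[symmetric] using False pB by (simp add: field_simps power2_eq_square)
      have "real (n+2)*real (n+1)*gk (k+1) - (real n)^2*gk k = (harm2 k - harm2 (k-1)) * 4^(k+1)/B"
        unfolding A C by (simp add: diff_divide_distrib algebra_simps)
      also have "\<dots> = 4^(k+1)/((real k)^2*B)" using hs by simp
      also have "\<dots> = 8 * hk k" using D by simp
      finally show ?thesis unfolding ev_def using True e by simp
    qed
  qed
qed

lemma PS_0: "PS a 0 = a 0"
  unfolding PS_def using powser_zero[of a] by simp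

lemma PS_2: "PS (\<lambda>n. if n = 0 then 2 else 0) s = 2"
proof -
  have "(\<lambda>n. (if n = 0 then 2 else 0) * s^n) = (\<lambda>n. if n = 0 then (2::real) else 0)" by auto
  moreover have "(\<lambda>n. if n = 0 then (2::real) else 0) sums 2" using sums_single[of 0 "\<lambda>_. 2::real"] by simp
  ultimately show ?thesis unfolding PS_def by (simp add: sums_iff)
qed

lemma PS_cmult: "conv a \<Longrightarrow> \<bar>s\<bar> < 1 \<Longrightarrow> PS (\<lambda>n. c * a n) s = c * PS a s"
  unfolding PS_def using PS_sums[of a s] by (simp add: sums_iff mult.assoc suminf_mult PS_def)

lemma H_sin:
  assumes "0 \<le> t" "t < pi/2"
  shows "PS (diffs (ev hk)) (sin t) * cos t = 2 * t" "PS (ev hk) (sin t) = t^2"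
proof -
  have lt: "\<bar>y\<bar> < pi/2" if "0 \<le> y" "y < pi/2" for y using that by auto
  let ?f = "\<lambda>t. PS (diffs (ev hk)) (sin t) * cos t - 2 * t"
  have "?f t = ?f 0"
  proof (rule const0[OF assms])
    fix y assume y: "0 \<le> y" "y < pi/2"
    have "(?f has_real_derivative (2 - 2)) (at y)"
      using sin_D2[OF conv_h lt[OF y]] unfolding rec_h PS_2
      by (intro DERIV_diff) (auto intro!: derivative_eq_intros)
    thus "(?f has_real_derivative 0) (at y)" by simp
  qed
  thus 1: "PS (diffs (ev hk)) (sin t) * cos t = 2 * t" by (simp add: PS_0 diffs_def ev_def)
  let ?g = "\<lambda>t. PS (ev hk) (sin t) - t^2"
  have "?g t = ?g 0"
  proof (rule const0[OF assms])
    fix y assume y: "0 \<le> y" "y < pi/2"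
    have "(?g has_real_derivative (PS (diffs (ev hk)) (sin y) * cos y - 2 * y)) (at y)"
      using sin_D1[OF conv_h lt[OF y]]
      by (intro DERIV_diff) (auto intro!: derivative_eq_intros)
    moreover have "PS (diffs (ev hk)) (sin y) * cos y = 2 * y"
    proof -
      let ?f = "\<lambda>t. PS (diffs (ev hk)) (sin t) * cos t - 2 * t"
      have "?f y = ?f 0"
      proof (rule const0[OF y])
        fix z assume z: "0 \<le> z" "z < pi/2"
        have "(?f has_real_derivative (2 - 2)) (at z)"
          using sin_D2[OF conv_h lt[OF z]] unfolding rec_h PS_2
          by (intro DERIV_diff) (auto intro!: derivative_eq_intros)
        thus "(?f has_real_derivative 0) (at z)" by simp
      qed
      thus ?thesis by (simp add: PS_0 diffs_def ev_def)
    qed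
    ultimately show "(?g has_real_derivative 0) (at y)" by simp
  qed
  thus "PS (ev hk) (sin t) = t^2" by (simp add: PS_0 ev_def hk_def)
qed

lemma G_sin:
  assumes "0 \<le> t" "t < pi/2"
  shows "PS (diffs (ev gk)) (sin t) * cos t = 8/3 * t^3" "PS (ev gk) (sin t) = 2/3 * t^4"
proof -
  have lt: "\<bar>y\<bar> < pi/2" if "0 \<le> y" "y < pi/2" for y using that by auto
  have D2: "((\<lambda>t. PS (diffs (ev gk)) (sin t) * cos t) has_real_derivative 8 * y^2) (at y)"
    if y: "0 \<le> y" "y < pi/2" for y
  proof -
    have "PS (\<lambda>n. 8 * ev hk n) (sin y) = 8 * y^2"
      using PS_cmult[OF conv_h sin_lt1[OF lt[OF y]]] H_sin(2)[OF y] by simp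
    thus ?thesis using sin_D2[OF conv_g lt[OF y]] unfolding rec_g by simp
  qed
  have S1: "PS (diffs (ev gk)) (sin y) * cos y = 8/3 * y^3" if y: "0 \<le> y" "y < pi/2" for y
  proof -
    let ?f = "\<lambda>t. PS (diffs (ev gk)) (sin t) * cos t - 8/3 * t^3"
    have "?f y = ?f 0"
    proof (rule const0[OF y])
      fix z assume z: "0 \<le> z" "z < pi/2"
      have "(?f has_real_derivative (8 * z^2 - 8/3 * (3 * z^2))) (at z)"
        using D2[OF z] by (intro DERIV_diff) (auto intro!: derivative_eq_intros)
      thus "(?f has_real_derivative 0) (at z)" by simp
    qed
    thus ?thesis by (simp add: PS_0 diffs_def ev_def gk_def harm2_def)
  qed
  show "PS (diffs (ev gk)) (sin t) * cos t = 8/3 * t^3" by (rule S1[OF assms])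
  let ?g = "\<lambda>t. PS (ev gk) (sin t) - 2/3 * t^4"
  have "?g t = ?g 0"
  proof (rule const0[OF assms])
    fix y assume y: "0 \<le> y" "y < pi/2"
    have "(?g has_real_derivative (PS (diffs (ev gk)) (sin y) * cos y - 2/3 * (4 * y^3))) (at y)"
      using sin_D1[OF conv_g lt[OF y]]
      by (intro DERIV_diff) (auto intro!: derivative_eq_intros)
    thus "(?g has_real_derivative 0) (at y)" using S1[OF y] by simp
  qed
  thus "PS (ev gk) (sin t) = 2/3 * t^4" by (simp add: PS_0 ev_def gk_def harm2_def)
qed

lemma even_sub:
  assumes "(\<lambda>n. ev f n * c n) sums S" "f 0 = 0"
  shows "(\<lambda>n. f (Suc n) * c (2 * Suc n)) sums S"
proof -
  have sm: "strict_mono (\<lambda>k::nat. 2*k)" by (rule strict_monoI) simp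
  have "(\<lambda>k. (\<lambda>n. ev f n * c n) (2*k)) sums S"
    by (rule iffD2[OF sums_mono_reindex[OF sm] assms(1)]) (auto simp: ev_def elim!: evenE)
  hence "(\<lambda>k. f k * c (2*k)) sums S" by (simp add: ev_def)
  hence "(\<lambda>k. (\<lambda>k. f k * c (2*k)) (Suc k)) sums (S - f 0 * c 0)"
    by (subst sums_Suc_iff) simp
  thus ?thesis using assms(2) by simp
qed

lemma setup_x:
  fixes x :: real
  assumes "0 \<le> x" "x < 4"
  defines "s \<equiv> sqrt x / 2"
  shows "0 \<le> s" "s < 1" "\<bar>s\<bar> < 1" "0 \<le> arcsin s" "arcsin s < pi/2" "sin (arcsin s) = s"
        "s^2 = x/4" "cos (arcsin s) = sqrt (4 - x) / 2"
proof -
  show s0: "0 \<le> s" unfolding s_def using assms by simp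
  have "sqrt x < sqrt 4" using assms by (subst real_sqrt_less_iff) simp
  thus s1: "s < 1" unfolding s_def by simp
  thus "\<bar>s\<bar> < 1" using s0 by simp
  show "0 \<le> arcsin s" using s0 s1 by (intro arcsin_nonneg) auto
  show "arcsin s < pi/2" using s0 s1 arcsin_lt_bounded[of s] by auto
  show "sin (arcsin s) = s" using s0 s1 by simp
  show s2: "s^2 = x/4" unfolding s_def using assms by (simp add: power_divide)
  have "cos (arcsin s) = sqrt (1 - s^2)" using s0 s1 by (intro cos_arcsin) auto
  also have "\<dots> = sqrt ((4 - x)/4)" unfolding s2 by (simp add: field_simps)
  also have "\<dots> = sqrt (4 - x) / 2" by (simp add: real_sqrt_divide)
  finally show "cos (arcsin s) = sqrt (4 - x) / 2" .
qed

lemma Gx: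
  fixes x :: real
  assumes "0 \<le> x" "x < 4"
  shows "(\<lambda>n. let k = Suc n in harm2 (k - 1) * x^k / ((real k)^2 * real ((2*k) choose k)))
           sums (2/3 * arcsin (sqrt x / 2)^4)"
proof -
  define s where "s = sqrt x / 2"
  note st = setup_x[OF assms, folded s_def]
  have "(\<lambda>n. ev gk n * s^n) sums PS (ev gk) s" by (rule PS_sums[OF conv_g st(3)])
  also have "PS (ev gk) s = 2/3 * arcsin s ^ 4" using G_sin(2)[OF st(4,5)] st(6) by simp
  finally have "(\<lambda>n. gk (Suc n) * s^(2 * Suc n)) sums (2/3 * arcsin s ^ 4)"
    by (rule even_sub) (simp add: gk_def)
  moreover have "gk (Suc n) * s^(2 * Suc n) = (let k = Suc n in harm2 (k - 1) * x^k / ((real k)^2 * real ((2*k) choose k)))" for n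
  proof -
    have "s^(2 * Suc n) = (x/4)^(Suc n)" by (subst power_mult) (simp add: st(7))
    thus ?thesis unfolding gk_def Let_def by (simp add: power_divide)
  qed
  ultimately show ?thesis unfolding s_def by simp
qed

lemma Fx:
  fixes x :: real
  assumes "0 \<le> x" "x < 4"
  shows "(\<lambda>n. let k = Suc n in harm2 (k - 1) * x ^ k / (real k * real ((2*k) choose k)))
             sums (4/3 * sqrt (x / (4 - x)) * (arcsin (sqrt x / 2))^3)"
proof -
  define s where "s = sqrt x / 2"
  note st = setup_x[OF assms, folded s_def]
  have c4: "sqrt (4 - x) > 0" using assms by simp
  have "(\<lambda>n. real n * ev gk n * s^n) sums (s * PS (diffs (ev gk)) s)"
    by (rule shift1[OF PS_sums[OF conv_diffs[OF conv_g] st(3)]])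
  also have "s * PS (diffs (ev gk)) s = 2 * (4/3 * sqrt (x / (4 - x)) * (arcsin s)^3)"
  proof -
    have e: "PS (diffs (ev gk)) s * (sqrt (4 - x) / 2) = 8/3 * arcsin s ^ 3"
      using G_sin(1)[OF st(4,5)] st(6,8) by simp
    have R: "sqrt (x / (4 - x)) = 2 * s / sqrt (4 - x)" unfolding s_def by (simp add: real_sqrt_divide)
    have P: "PS (diffs (ev gk)) s = 16/3 * arcsin s ^ 3 / sqrt (4 - x)"
      using e c4 by (simp add: field_simps)
    show ?thesis unfolding P R using c4 by (simp add: field_simps)
  qed
  finally have "(\<lambda>n. (\<lambda>n. real n * ev gk n * s^n) n * 1/2) sums (2 * (4/3 * sqrt (x / (4 - x)) * (arcsin s)^3) * 1/2)"
    by (intro sums_mult2 sums_divide)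
  moreover have "(\<lambda>n. (\<lambda>n. real n * ev gk n * s^n) n * 1/2) = (\<lambda>n. ev (\<lambda>k. real k * gk k) n * s^n)"
    by (rule ext) (auto simp: ev_def elim!: evenE)
  ultimately have "(\<lambda>n. ev (\<lambda>k. real k * gk k) n * s^n) sums (4/3 * sqrt (x / (4 - x)) * (arcsin s)^3)"
    by (simp add: ac_simps)
  hence "(\<lambda>n. real (Suc n) * gk (Suc n) * s^(2 * Suc n)) sums (4/3 * sqrt (x / (4 - x)) * (arcsin s)^3)"
    by (rule even_sub) simp
  moreover have "real (Suc n) * gk (Suc n) * s^(2 * Suc n) = (let k = Suc n in harm2 (k - 1) * x ^ k / (real k * real ((2*k) choose k)))" for n
  proof -
    have "s^(2 * Suc n) = (x/4)^(Suc n)" by (subst power_mult) (simp add: st(7))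
    thus ?thesis unfolding gk_def Let_def by (simp add: power_divide power2_eq_square del: of_nat_Suc)
  qed
  ultimately show ?thesis unfolding s_def by simp
qed

lemma cos_pi5: "cos (pi/5) = (1 + sqrt 5) / 4"
proof -
  define c where "c = cos (pi/5)"
  have cpos: "c > 0" unfolding c_def using pi_gt_zero by (intro cos_gt_zero_pi) (auto simp: field_simps)
  have "cos (3 * (pi/5)) = - cos (2 * (pi/5))"
    using cos_pi_minus[of "2*(pi/5)"] by (simp add: field_simps)
  hence "4 * c^3 - 3 * c = - (2 * c^2 - 1)" unfolding c_def cos_treble_cos cos_double_cos .
  hence "(c + 1) * (4*c^2 - 2*c - 1) = 0" by (simp add: algebra_simps power2_eq_square power3_eq_cube)
  hence q: "4*c^2 - 2*c - 1 = 0" using cpos by simp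
  have nn: "4*c - 1 \<ge> 0"
  proof (rule ccontr)
    assume "\<not> 4*c - 1 \<ge> 0"
    hence "c < 1/4" by simp
    hence "c * c < (1/4) * (1/4)" using cpos by (intro mult_strict_mono) auto
    hence "c^2 < 1/16" by (simp add: power2_eq_square)
    thus False using q cpos by simp
  qed
  have "(4*c - 1)^2 = 5" using q by (simp add: algebra_simps power2_eq_square)
  hence "sqrt 5 = 4*c - 1" using nn by (intro real_sqrt_unique) auto
  thus ?thesis unfolding c_def by simp
qed

lemma sq5: "(sqrt 5)^2 = (5::real)" by simp

lemma sin_3pi10: "sin (3*pi/10) = (1 + sqrt 5) / 4"
  using cos_pi5 sin_cos_eq[of "3*pi/10"] by (simp add: field_simps)

lemma sin_pi10: "sin (pi/10) = (sqrt 5 - 1) / 4"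
proof -
  have "sin (pi/10) = cos (2 * (pi/5))" using sin_cos_eq[of "pi/10"] by (simp add: field_simps)
  also have "\<dots> = 2 * (cos (pi/5))^2 - 1" by (rule cos_double_cos)
  also have "\<dots> = (sqrt 5 - 1) / 4" unfolding cos_pi5 by (simp add: power2_eq_square field_simps)
  finally show ?thesis .
qed

lemma sin2_2pi5: "(sin (2*pi/5))^2 = (5 + sqrt 5) / 8"
proof -
  have "cos (2*pi/5) = sin (pi/10)" using sin_cos_eq[of "pi/10"] by (simp add: field_simps)
  hence c: "cos (2*pi/5) = (sqrt 5 - 1) / 4" using sin_pi10 by simp
  have "(sin (2*pi/5))^2 = 1 - ((sqrt 5 - 1) / 4)^2" using sin_squared_eq[of "2*pi/5"] unfolding c .
  thus ?thesis by (simp add: power2_eq_square field_simps)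
qed

lemma sin2_pi5: "(sin (pi/5))^2 = (5 - sqrt 5) / 8"
  using sin_squared_eq[of "pi/5"] cos_pi5 by (simp add: power2_eq_square field_simps)

lemma arc_val:
  assumes "0 \<le> t" "t < pi/2"
  shows "arcsin (sqrt (4 * (sin t)^2) / 2) = t" "4 * (sin t)^2 < 4"
proof -
  have "sin t \<ge> 0" using assms by (intro sin_ge_zero) auto
  hence "sqrt (4 * (sin t)^2) / 2 = sin t" by (simp add: real_sqrt_mult)
  thus "arcsin (sqrt (4 * (sin t)^2) / 2) = t" using assms by (simp add: arcsin_sin)
  show "4 * (sin t)^2 < 4" using sin_lt1[of t] assms by (simp add: abs_square_less_1)
qed

definition Sx :: "real \<Rightarrow> nat \<Rightarrow> real" where
  "Sx x n = (let k = Suc n in harm2 (k - 1) * x^k / ((real k)^2 * real ((2*k) choose k)))"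

lemma G_t:
  assumes "0 \<le> t" "t < pi/2" "x = 4 * (sin t)^2"
  shows "Sx x sums (2/3 * t^4)"
  using Gx[of x] arc_val[OF assms(1,2)] assms(3) unfolding Sx_def by simp

lemma S_X: "Sx ((3 + sqrt 5)/2) sums (2/3 * (3*pi/10)^4)"
proof (rule G_t)
  show "(3 + sqrt 5)/2 = 4 * (sin (3*pi/10))^2" unfolding sin_3pi10 by (simp add: power2_eq_square field_simps)
qed (use pi_gt_zero in linarith)+
lemma S_Y: "Sx ((3 - sqrt 5)/2) sums (2/3 * (pi/10)^4)"
proof (rule G_t)
  show "(3 - sqrt 5)/2 = 4 * (sin (pi/10))^2" unfolding sin_pi10 by (simp add: power2_eq_square field_simps)
qed (use pi_gt_zero in linarith)+
lemma S_A: "Sx ((5 + sqrt 5)/2) sums (2/3 * (2*pi/5)^4)"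
proof (rule G_t)
  show "(5 + sqrt 5)/2 = 4 * (sin (2*pi/5))^2" unfolding sin2_2pi5 by simp
qed (use pi_gt_zero in linarith)+
lemma S_B: "Sx ((5 - sqrt 5)/2) sums (2/3 * (pi/5)^4)"
proof (rule G_t)
  show "(5 - sqrt 5)/2 = 4 * (sin (pi/5))^2" unfolding sin2_pi5 by simp
qed (use pi_gt_zero in linarith)+
lemma S_1: "Sx 1 sums (2/3 * (pi/6)^4)"
proof (rule G_t)
  show "1 = 4 * (sin (pi/6))^2" unfolding sin_30 by (simp add: power2_eq_square)
qed (use pi_gt_zero in linarith)+

lemma lucas_closed: "real (lucas n) = ((1 + sqrt 5)/2)^n + ((1 - sqrt 5)/2)^n"
proof -
  define p :: real where "p = (1 + sqrt 5)/2"
  define q :: real where "q = (1 - sqrt 5)/2"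
  have pp: "p^2 = p + 1" "q^2 = q + 1" unfolding p_def q_def by (simp_all add: power2_eq_square field_simps)
  have "real (lucas n) = p^n + q^n"
  proof (induction n rule: lucas.induct)
    case (3 n)
    have a: "p^Suc (Suc n) = p^Suc n + p^n"
    proof -
      have "p^Suc (Suc n) = p^2 * p^n" by (simp add: power2_eq_square)
      also have "\<dots> = (p+1) * p^n" by (simp add: pp(1))
      also have "\<dots> = p^Suc n + p^n" by (simp add: algebra_simps)
      finally show ?thesis .
    qed
    have b: "q^Suc (Suc n) = q^Suc n + q^n"
    proof -
      have "q^Suc (Suc n) = q^2 * q^n" by (simp add: power2_eq_square)
      also have "\<dots> = (q+1) * q^n" by (simp add: pp(2))
      also have "\<dots> = q^Suc n + q^n" by (simp add: algebra_simps)
      finally show ?thesis .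
    qed
    have "real (lucas (Suc (Suc n))) = real (lucas (Suc n)) + real (lucas n)" by simp
    thus ?case using 3 a b by linarith
  qed (simp_all add: p_def q_def field_simps)
  thus ?thesis unfolding p_def q_def .
qed

lemma fib_cf: "real (fib n) = (((1 + sqrt 5)/2)^n - ((1 - sqrt 5)/2)^n) / sqrt 5"
  using fib_closed_form[of n] by simp

lemma phi_sq: "((1 + sqrt 5)/2)^2 = (3 + sqrt 5)/2" "((1 - sqrt 5)/2)^2 = (3 - sqrt 5)/2"
  by (simp_all add: power2_eq_square field_simps)

lemma lucas2: "real (lucas (2*k)) = ((3 + sqrt 5)/2)^k + ((3 - sqrt 5)/2)^k"
  unfolding lucas_closed power_mult phi_sq ..

lemma fib2: "real (fib (2*k)) = (((3 + sqrt 5)/2)^k - ((3 - sqrt 5)/2)^k) / sqrt 5"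
  unfolding fib_cf power_mult phi_sq ..

lemma s55: "sqrt 5 * (sqrt 5 * x) = 5 * (x::real)"
  by (simp add: mult.assoc[symmetric])

lemma uv:
  "v_seq k = ((5 + sqrt 5)/2)^k + ((5 - sqrt 5)/2)^k"
  "u_seq k = (((5 + sqrt 5)/2)^k - ((5 - sqrt 5)/2)^k) / sqrt 5"
proof -
  define p :: real where "p = (1 + sqrt 5)/2"
  define q :: real where "q = (1 - sqrt 5)/2"
  have ea: "(5 + sqrt 5)/2 = sqrt 5 * p" unfolding p_def by (simp add: field_simps)
  have eb: "(5 - sqrt 5)/2 = - (sqrt 5 * q)" unfolding q_def by (simp add: field_simps)
  have L: "real (lucas k) = p^k + q^k" unfolding p_def q_def by (rule lucas_closed)
  have F: "real (fib k) = (p^k - q^k) / sqrt 5" unfolding p_def q_def by (rule fib_cf)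
  have s5: "sqrt 5 \<noteq> 0" by simp
  show "v_seq k = ((5 + sqrt 5)/2)^k + ((5 - sqrt 5)/2)^k"
   and "u_seq k = (((5 + sqrt 5)/2)^k - ((5 - sqrt 5)/2)^k) / sqrt 5"
  proof (atomize(full), cases "even k")
    case True
    then obtain m where k: "k = 2*m" by blast
    have r: "sqrt 5 ^ k = 5^m" unfolding k power_mult by simp
    have ng: "(-1::real)^k = 1" using True by simp
    have d: "k div 2 = m" using k by simp
    show "v_seq k = ((5 + sqrt 5)/2)^k + ((5 - sqrt 5)/2)^k \<and>
          u_seq k = (((5 + sqrt 5)/2)^k - ((5 - sqrt 5)/2)^k) / sqrt 5"
      unfolding ea eb power_mult_distrib power_minus[of "sqrt 5 * q"] v_seq_def u_seq_def L F
      using True d r ng s5 by (simp add: field_simps)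
  next
    case False
    then obtain m where k: "k = 2*m + 1" using oddE by blast
    have r: "sqrt 5 ^ k = 5^m * sqrt 5" unfolding k power_add power_mult by simp
    have ng: "(-1::real)^k = -1" using False by simp
    have d: "(k+1) div 2 = m + 1" "(k - 1) div 2 = m" "k div 2 = m" using k by auto
    show "v_seq k = ((5 + sqrt 5)/2)^k + ((5 - sqrt 5)/2)^k \<and>
          u_seq k = (((5 + sqrt 5)/2)^k - ((5 - sqrt 5)/2)^k) / sqrt 5"
      unfolding ea eb power_mult_distrib power_minus[of "sqrt 5 * q"] v_seq_def u_seq_def L F
      using False d r ng s5 by (simp add: field_simps s55)
  qed
qed

lemma lemA: "(A + B) * h / (d::real) = h * A / d + h * B / d"
  by (cases "d = 0") (simp_all add: field_simps)
lemma lemB: "((A - B) / c) * h / (d::real) = (h * A / d - h * B / d) / c"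
  by (cases "d = 0"; cases "c = 0") (simp_all add: field_simps)
lemma s33: "sqrt 3 * (sqrt 3 * x) = 3 * (x::real)"
  by (simp add: mult.assoc[symmetric])

theorem theorem1p1:
  shows "(\<lambda>n. let k = Suc n in harm2 (k - 1) / ((real k)^2 * real ((2*k) choose k)))
           sums (pi^4 / 1944)
    \<and> (\<lambda>n. let k = Suc n in real (lucas (2*k)) * harm2 (k - 1) / ((real k)^2 * real ((2*k) choose k)))
           sums (41 * pi^4 / 7500)
    \<and> (\<lambda>n. let k = Suc n in real (fib (2*k)) * harm2 (k - 1) / ((real k)^2 * real ((2*k) choose k)))
           sums (2 * pi^4 / (375 * sqrt 5))
    \<and> (\<lambda>n. let k = Suc n in v_seq k * harm2 (k - 1) / ((real k)^2 * real ((2*k) choose k)))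
           sums (34 * pi^4 / 1875)
    \<and> (\<lambda>n. let k = Suc n in u_seq k * harm2 (k - 1) / ((real k)^2 * real ((2*k) choose k)))
           sums (2 * pi^4 / (125 * sqrt 5))
    \<and> (\<forall>x::real. 0 \<le> x \<and> x < 4 \<longrightarrow>
           (\<lambda>n. let k = Suc n in harm2 (k - 1) * x ^ k / (real k * real ((2*k) choose k)))
             sums (4/3 * sqrt (x / (4 - x)) * (arcsin (sqrt x / 2))^3))
    \<and> (\<lambda>n. let k = Suc n in harm2 (k - 1) / (real k * real ((2*k) choose k)))
           sums (pi^3 / (162 * sqrt 3))
    \<and> (\<lambda>n. let k = Suc n in 3 ^ k * harm2 (k - 1) / (real k * real ((2*k) choose k)))
           sums (4 * pi^3 / (27 * sqrt 3))"
proof (intro conjI allI impI)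
  define X :: real where "X = (3 + sqrt 5)/2"
  define Y :: real where "Y = (3 - sqrt 5)/2"
  define a :: real where "a = (5 + sqrt 5)/2"
  define b :: real where "b = (5 - sqrt 5)/2"
  show "(\<lambda>n. let k = Suc n in harm2 (k - 1) / ((real k)^2 * real ((2*k) choose k))) sums (pi^4 / 1944)"
  proof -
    have f: "(\<lambda>n. let k = Suc n in harm2 (k - 1) / ((real k)^2 * real ((2*k) choose k))) = Sx 1"
      by (rule ext) (simp add: Sx_def Let_def)
    have e: "2/3 * (pi/6)^4 = pi^4 / 1944" by (simp add: power_divide)
    show ?thesis unfolding f using S_1 unfolding e .
  qed
  show "(\<lambda>n. let k = Suc n in real (lucas (2*k)) * harm2 (k - 1) / ((real k)^2 * real ((2*k) choose k))) sums (41 * pi^4 / 7500)"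
  proof -
    have f: "(\<lambda>n. let k = Suc n in real (lucas (2*k)) * harm2 (k - 1) / ((real k)^2 * real ((2*k) choose k))) = (\<lambda>n. Sx X n + Sx Y n)"
      by (rule ext) (simp only: Sx_def Let_def lucas2 lemA X_def Y_def)
    have g: "(\<lambda>n. Sx X n + Sx Y n) sums (2/3 * (3*pi/10)^4 + 2/3 * (pi/10)^4)"
      unfolding X_def Y_def by (intro sums_add S_X S_Y)
    have e: "2/3 * (3*pi/10)^4 + 2/3 * (pi/10)^4 = 41 * pi^4 / 7500" by (simp add: power_divide power_mult_distrib)
    show ?thesis unfolding f using g unfolding e .
  qed
  show "(\<lambda>n. let k = Suc n in real (fib (2*k)) * harm2 (k - 1) / ((real k)^2 * real ((2*k) choose k))) sums (2 * pi^4 / (375 * sqrt 5))"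
  proof -
    have f: "(\<lambda>n. let k = Suc n in real (fib (2*k)) * harm2 (k - 1) / ((real k)^2 * real ((2*k) choose k))) = (\<lambda>n. (Sx X n - Sx Y n) / sqrt 5)"
      by (rule ext) (simp only: Sx_def Let_def fib2 lemB X_def Y_def)
    have g: "(\<lambda>n. (Sx X n - Sx Y n) / sqrt 5) sums ((2/3 * (3*pi/10)^4 - 2/3 * (pi/10)^4) / sqrt 5)"
      unfolding X_def Y_def by (intro sums_divide sums_diff S_X S_Y)
    have e: "(2/3 * (3*pi/10)^4 - 2/3 * (pi/10)^4) / sqrt 5 = 2 * pi^4 / (375 * sqrt 5)" by (simp add: power_divide power_mult_distrib)
    show ?thesis unfolding f using g unfolding e .
  qed
  show "(\<lambda>n. let k = Suc n in v_seq k * harm2 (k - 1) / ((real k)^2 * real ((2*k) choose k))) sums (34 * pi^4 / 1875)"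
  proof -
    have f: "(\<lambda>n. let k = Suc n in v_seq k * harm2 (k - 1) / ((real k)^2 * real ((2*k) choose k))) = (\<lambda>n. Sx a n + Sx b n)"
      by (rule ext) (simp only: Sx_def Let_def uv lemA a_def b_def)
    have g: "(\<lambda>n. Sx a n + Sx b n) sums (2/3 * (2*pi/5)^4 + 2/3 * (pi/5)^4)"
      unfolding a_def b_def by (intro sums_add S_A S_B)
    have e: "2/3 * (2*pi/5)^4 + 2/3 * (pi/5)^4 = 34 * pi^4 / 1875" by (simp add: power_divide power_mult_distrib)
    show ?thesis unfolding f using g unfolding e .
  qed
  show "(\<lambda>n. let k = Suc n in u_seq k * harm2 (k - 1) / ((real k)^2 * real ((2*k) choose k))) sums (2 * pi^4 / (125 * sqrt 5))"
  proof -
    have f: "(\<lambda>n. let k = Suc n in u_seq k * harm2 (k - 1) / ((real k)^2 * real ((2*k) choose k))) = (\<lambda>n. (Sx a n - Sx b n) / sqrt 5)"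
      by (rule ext) (simp only: Sx_def Let_def uv lemB a_def b_def)
    have g: "(\<lambda>n. (Sx a n - Sx b n) / sqrt 5) sums ((2/3 * (2*pi/5)^4 - 2/3 * (pi/5)^4) / sqrt 5)"
      unfolding a_def b_def by (intro sums_divide sums_diff S_A S_B)
    have e: "(2/3 * (2*pi/5)^4 - 2/3 * (pi/5)^4) / sqrt 5 = 2 * pi^4 / (125 * sqrt 5)" by (simp add: power_divide power_mult_distrib)
    show ?thesis unfolding f using g unfolding e .
  qed
  fix x :: real
  assume "0 \<le> x \<and> x < 4"
  thus "(\<lambda>n. let k = Suc n in harm2 (k - 1) * x ^ k / (real k * real ((2*k) choose k)))
             sums (4/3 * sqrt (x / (4 - x)) * (arcsin (sqrt x / 2))^3)"
    using Fx by auto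
next
  show "(\<lambda>n. let k = Suc n in harm2 (k - 1) / (real k * real ((2*k) choose k))) sums (pi^3 / (162 * sqrt 3))"
  proof -
    have g: "(\<lambda>n. let k = Suc n in harm2 (k - 1) * 1 ^ k / (real k * real ((2*k) choose k)))
             sums (4/3 * sqrt (1 / (4 - 1)) * (arcsin (sqrt 1 / 2))^3)" by (rule Fx) auto
    have f: "(\<lambda>n. let k = Suc n in harm2 (k - 1) / (real k * real ((2*k) choose k))) =
             (\<lambda>n. let k = Suc n in harm2 (k - 1) * 1 ^ k / (real k * real ((2*k) choose k)))"
      by (simp only: power_one mult_1_right)
    have e: "4/3 * sqrt (1 / (4 - 1)) * (arcsin (sqrt 1 / 2))^3 = pi^3 / (162 * sqrt (3::real))"
      by (simp add: real_sqrt_divide power_divide)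
    show ?thesis unfolding f using g unfolding e .
  qed
next
  show "(\<lambda>n. let k = Suc n in 3 ^ k * harm2 (k - 1) / (real k * real ((2*k) choose k))) sums (4 * pi^3 / (27 * sqrt 3))"
  proof -
    have g: "(\<lambda>n. let k = Suc n in harm2 (k - 1) * 3 ^ k / (real k * real ((2*k) choose k)))
             sums (4/3 * sqrt (3 / (4 - 3)) * (arcsin (sqrt 3 / 2))^3)" by (rule Fx) auto
    have f: "(\<lambda>n. let k = Suc n in 3 ^ k * harm2 (k - 1) / (real k * real ((2*k) choose k))) =
             (\<lambda>n. let k = Suc n in harm2 (k - 1) * 3 ^ k / (real k * real ((2*k) choose k)))"
      by (simp only: mult.commute)
    have as: "arcsin (sqrt 3 / 2) = pi/3"
      using arcsin_sin[of "pi/3"] sin_60 pi_gt_zero by simp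
    have e: "4/3 * sqrt (3 / (4 - 3)) * (arcsin (sqrt 3 / 2))^3 = 4 * pi^3 / (27 * sqrt (3::real))"
      unfolding as by (simp add: power_divide field_simps s33)
    show ?thesis unfolding f using g unfolding e .
  qed
qed

end
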